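(* For all integers $n\ge0$, $\overline{bt}(9n+6)\equiv 0\pmod 3$.
   Context: For $|q|<1$ and a positive integer $k$ let $f_k:=\prod_{m=1}^\infty(1-q^{mk})$. The function $\overline{bt}(n)$ is defined by $\sum_{n\ge0}\overline{bt}(n)q^n=\frac{f_4^3}{f_1^6f_2^3}$. *)

theory Defs
  imports "HOL-Computational_Algebra.Formal_Power_Series"
begin

definition euler_trunc :: "nat \<Rightarrow> nat \<Rightarrow> rat fps" where
  "euler_trunc k N = (\<Prod>m\<in>{1..N}. 1 - fps_X ^ (m * k))"

text \<open>f_k = prod_{m>=1} (1 - q^(m k)) as a formal power series (k >= 1):
  the n-th coefficient of the infinite product equals the n-th coefficient
  of the product over m = 1..n, since the later factors are 1 + O(q^(n+1)).\<close>
definition f_eta :: "nat \<Rightarrow> rat fps" where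
  "f_eta k = Abs_fps (\<lambda>n. fps_nth (euler_trunc k n) n)"

definition bt_gf :: "rat fps" where
  "bt_gf = f_eta 4 ^ 3 / (f_eta 1 ^ 6 * f_eta 2 ^ 3)"

definition bt_bar :: "nat \<Rightarrow> rat" where
  "bt_bar n = fps_nth bt_gf n"

end

theory Submission
  imports Defs
begin
unbundle fps_syntax


definition agree :: "nat \<Rightarrow> rat fps \<Rightarrow> rat fps \<Rightarrow> bool" where
  "agree n A B \<longleftrightarrow> (\<forall>i\<le>n. A $ i = B $ i)"

lemma agree_refl[simp]: "agree n A A" by (simp add: agree_def)
lemma agree_sym: "agree n A B \<Longrightarrow> agree n B A" by (simp add: agree_def)
lemma agree_trans: "agree n A B \<Longrightarrow> agree n B C \<Longrightarrow> agree n A C" by (simp add: agree_def)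
lemma agree_mono: "agree N A B \<Longrightarrow> n \<le> N \<Longrightarrow> agree n A B" by (simp add: agree_def)

lemma agree_mult: "agree n A A' \<Longrightarrow> agree n B B' \<Longrightarrow> agree n (A*B) (A'*B')"
  unfolding agree_def fps_mult_nth by (auto intro!: sum.cong)

lemma agree_add: "agree n A A' \<Longrightarrow> agree n B B' \<Longrightarrow> agree n (A+B) (A'+B')"
  unfolding agree_def by auto

lemma agree_cancel:
  assumes "agree n (A*U) (B*U)" "U $ 0 \<noteq> 0"
  shows "agree n A B"
proof -
  have "agree n (A*U*inverse U) (B*U*inverse U)" using agree_mult[OF assms(1) agree_refl] .
  moreover have "U * inverse U = 1" using assms(2) by (rule inverse_mult_eq_1')
  ultimately show ?thesis by (simp add: mult.assoc)
qed

definition ptr :: "(nat \<Rightarrow> rat fps) \<Rightarrow> nat \<Rightarrow> rat fps" where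
  "ptr g N = (\<Prod>m\<in>{1..N}. g m)"
definition pinf :: "(nat \<Rightarrow> rat fps) \<Rightarrow> rat fps" where
  "pinf g = Abs_fps (\<lambda>n. ptr g n $ n)"
definition good :: "(nat \<Rightarrow> rat fps) \<Rightarrow> bool" where
  "good g \<longleftrightarrow> (\<forall>m\<ge>1. agree (m-1) (g m) 1)"

lemma ptr_Suc: "ptr g (Suc N) = ptr g N * g (Suc N)"
  unfolding ptr_def by (simp add: prod.cl_ivl_Suc)

lemma ptr_0[simp]: "ptr g 0 = 1" unfolding ptr_def by simp

lemma ptr_stab: assumes "good g" "n \<le> N" shows "agree n (ptr g N) (ptr g n)"
  using assms(2)
proof (induction N)
  case 0 then show ?case by simp
next
  case (Suc N)
  show ?case
  proof (cases "n = Suc N")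
    case True then show ?thesis by simp
  next
    case False
    then have nN: "n \<le> N" using Suc.prems by simp
    have "agree N (g (Suc N)) 1" using assms(1) unfolding good_def by (metis diff_Suc_1 le_add1 plus_1_eq_Suc)
    then have "agree n (g (Suc N)) 1" using nN agree_mono by blast
    then have "agree n (ptr g N * g (Suc N)) (ptr g n * 1)"
      using agree_mult Suc.IH[OF nN] by blast
    then show ?thesis by (simp add: ptr_Suc)
  qed
qed

lemma pinf_agree: assumes "good g" "n \<le> N" shows "agree n (pinf g) (ptr g N)"
  unfolding agree_def
proof (intro allI impI)
  fix i assume "i \<le> n"
  then have "agree i (ptr g N) (ptr g i)" using ptr_stab[OF assms(1)] assms(2) by simp
  then show "pinf g $ i = ptr g N $ i" unfolding pinf_def agree_def by simp
qed

lemma good_euler: "k \<ge> 1 \<Longrightarrow> good (\<lambda>m. 1 - fps_X ^ (m*k))"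
  unfolding good_def agree_def
proof (intro allI impI)
  fix m i :: nat assume "k\<ge>1" "m \<ge> 1" "i \<le> m - 1"
  then have "i < m*k" by (metis diff_less dual_order.strict_trans1 le_numeral_extra(4) less_one mult.right_neutral mult_le_mono2 not_le)
  then show "(1 - fps_X ^ (m * k)) $ i = (1::rat fps) $ i" by simp
qed

lemma f_eta_pinf: "f_eta k = pinf (\<lambda>m. 1 - fps_X ^ (m*k))"
  unfolding f_eta_def pinf_def ptr_def euler_trunc_def by simp

lemma euler_ptr: "euler_trunc k N = ptr (\<lambda>m. 1 - fps_X ^ (m*k)) N"
  unfolding ptr_def euler_trunc_def by simp

lemma f_eta_agree: "k \<ge> 1 \<Longrightarrow> n \<le> N \<Longrightarrow> agree n (f_eta k) (euler_trunc k N)"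
  by (simp add: f_eta_pinf euler_ptr pinf_agree good_euler)



lemma agree_power: "agree n A B \<Longrightarrow> agree n (A^m) (B^m)"
  by (induction m) (auto intro: agree_mult)

definition intg :: "rat fps \<Rightarrow> bool" where "intg A \<longleftrightarrow> (\<forall>n. A $ n \<in> \<int>)"
definition c3 :: "rat fps \<Rightarrow> bool" where "c3 A \<longleftrightarrow> (\<forall>n. A $ n / 3 \<in> \<int>)"

lemma intg_1[simp]: "intg 1" unfolding intg_def by simp
lemma intg_0[simp]: "intg 0" unfolding intg_def by simp
lemma intg_Xp[simp]: "intg (fps_X ^ a)" unfolding intg_def by simp
lemma intg_add: "intg A \<Longrightarrow> intg B \<Longrightarrow> intg (A+B)" unfolding intg_def by auto
lemma intg_diff: "intg A \<Longrightarrow> intg B \<Longrightarrow> intg (A-B)" unfolding intg_def by auto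
lemma intg_mult: "intg A \<Longrightarrow> intg B \<Longrightarrow> intg (A*B)"
  unfolding intg_def fps_mult_nth by (auto intro!: Ints_sum Ints_mult)
lemma intg_power: "intg A \<Longrightarrow> intg (A^m)"
  by (induction m) (auto intro: intg_mult)
lemma intg_ptr: "(\<And>m. intg (g m)) \<Longrightarrow> intg (ptr g N)"
  by (induction N) (auto simp: ptr_Suc intro: intg_mult)
lemma intg_pinf: "(\<And>m. intg (g m)) \<Longrightarrow> intg (pinf g)"
  using intg_ptr unfolding intg_def pinf_def by simp
lemma intg_f_eta: "intg (f_eta k)"
  unfolding f_eta_pinf by (rule intg_pinf) (auto intro: intg_diff)
lemma intg_euler: "intg (euler_trunc k N)"
  unfolding euler_ptr by (rule intg_ptr) (auto intro: intg_diff)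

lemma c3_0[simp]: "c3 0" unfolding c3_def by simp
lemma c3_add: "c3 A \<Longrightarrow> c3 B \<Longrightarrow> c3 (A+B)" unfolding c3_def by (auto simp: add_divide_distrib)
lemma c3_diff: "c3 A \<Longrightarrow> c3 B \<Longrightarrow> c3 (A-B)" unfolding c3_def by (auto simp: diff_divide_distrib)
lemma c3_mult_left: "c3 A \<Longrightarrow> intg B \<Longrightarrow> c3 (A*B)"
proof -
  assume a: "c3 A" "intg B"
  show "c3 (A*B)" unfolding c3_def fps_mult_nth sum_divide_distrib
  proof
    fix n show "(\<Sum>i = 0..n. A $ i * B $ (n - i) / 3) \<in> \<int>"
    proof (rule Ints_sum)
      fix i
      have "A $ i * B $ (n - i) / 3 = (A $ i / 3) * B $ (n-i)" by simp
      then show "A $ i * B $ (n - i) / 3 \<in> \<int>" using a unfolding c3_def intg_def by (metis Ints_mult)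
    qed
  qed
qed
lemma c3_mult_right: "c3 A \<Longrightarrow> intg B \<Longrightarrow> c3 (B*A)"
  using c3_mult_left by (simp add: mult.commute)

lemma c3_congmult:
  assumes "c3 (A - A')" "c3 (B - B')" "intg A'" "intg B"
  shows "c3 (A*B - A'*B')"
proof -
  have "A*B - A'*B' = (A - A')*B + A'*(B-B')" by (simp add: algebra_simps)
  then show ?thesis using assms c3_add c3_mult_left c3_mult_right by metis
qed

lemma c3_congpow:
  assumes "c3 (A - B)" "intg A" "intg B"
  shows "c3 (A^m - B^m)"
proof (induction m)
  case 0 then show ?case by simp
next
  case (Suc m)
  have "c3 (A * A^m - B * B^m)"
    by (rule c3_congmult[OF assms(1) Suc.IH assms(3) intg_power[OF assms(2)]])
  then show ?case by simp
qed

lemma c3_cancel: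
  assumes "intg D" "D $ 0 = 1" "c3 (A*D)"
  shows "c3 A"
  unfolding c3_def
proof
  fix n show "A $ n / 3 \<in> \<int>"
  proof (induction n rule: less_induct)
    case (less n)
    have e: "(A*D) $ n = A $ n + (\<Sum>i=0..<n. A $ i * D $ (n-i))"
      unfolding fps_mult_nth using assms(2)
      by (simp add: sum.atLeastLessThan_Suc atLeastLessThanSuc_atLeastAtMost[symmetric] add.commute)
    have s: "(\<Sum>i=0..<n. A $ i * D $ (n-i)) / 3 \<in> \<int>"
      unfolding sum_divide_distrib
    proof (rule Ints_sum)
      fix i assume "i \<in> {0..<n}"
      then have "A $ i / 3 \<in> \<int>" using less by simp
      moreover have "D $ (n-i) \<in> \<int>" using assms(1) unfolding intg_def by simp
      ultimately show "A $ i * D $ (n - i) / 3 \<in> \<int>" by (metis Ints_mult times_divide_eq_left)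
    qed
    have "(A*D) $ n / 3 \<in> \<int>" using assms(3) unfolding c3_def by simp
    then have "(A*D) $ n / 3 - (\<Sum>i=0..<n. A $ i * D $ (n-i)) / 3 \<in> \<int>" using s by (rule Ints_diff)
    then show ?case unfolding e by (simp add: add_divide_distrib)
  qed
qed

lemma intg_cancel:
  assumes "intg D" "D $ 0 = 1" "intg (A*D)"
  shows "intg A"
  unfolding intg_def
proof
  fix n show "A $ n \<in> \<int>"
  proof (induction n rule: less_induct)
    case (less n)
    have e: "(A*D) $ n = A $ n + (\<Sum>i=0..<n. A $ i * D $ (n-i))"
      unfolding fps_mult_nth using assms(2)
      by (simp add: sum.atLeastLessThan_Suc atLeastLessThanSuc_atLeastAtMost[symmetric] add.commute)
    have s: "(\<Sum>i=0..<n. A $ i * D $ (n-i)) \<in> \<int>"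
    proof (rule Ints_sum)
      fix i assume "i \<in> {0..<n}"
      then show "A $ i * D $ (n - i) \<in> \<int>" using less assms(1) unfolding intg_def by (simp add: Ints_mult)
    qed
    have "(A*D) $ n \<in> \<int>" using assms(3) unfolding intg_def by simp
    then have "(A*D) $ n - (\<Sum>i=0..<n. A $ i * D $ (n-i)) \<in> \<int>" using s by (rule Ints_diff)
    then show ?case unfolding e by simp
  qed
qed

lemma cube_factor: "c3 ((1 - fps_X ^ a)^3 - (1 - fps_X ^ (a*3)))"
proof -
  have "(1 - fps_X ^ a)^3 - (1 - fps_X ^ (a*3)) = (3::rat fps) * (fps_X^(a*2) - fps_X ^ a)"
    by (simp add: power_mult power3_eq_cube power2_eq_square algebra_simps)
  moreover have "c3 ((3::rat fps) * B)" if "intg B" for B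
    using that unfolding c3_def intg_def
    by (simp add: numeral_fps_const fps_mult_left_const_nth)
  ultimately show ?thesis by (metis intg_diff intg_Xp right_diff_distrib)
qed

lemma cube_trunc: "c3 (euler_trunc k N ^ 3 - euler_trunc (3*k) N)"
proof (induction N)
  case 0 then show ?case by (simp add: euler_trunc_def)
next
  case (Suc N)
  have e1: "euler_trunc k (Suc N) = euler_trunc k N * (1 - fps_X ^ (Suc N * k))"
    by (simp add: euler_ptr ptr_Suc)
  have e2: "euler_trunc (3*k) (Suc N) = euler_trunc (3*k) N * (1 - fps_X ^ ((Suc N * k)*3))"
    by (simp add: euler_ptr ptr_Suc algebra_simps)
  have "c3 (euler_trunc k N ^ 3 * (1 - fps_X ^ (Suc N * k))^3 - euler_trunc (3*k) N * (1 - fps_X ^ ((Suc N * k)*3)))"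
    by (rule c3_congmult[OF Suc.IH cube_factor intg_euler]) (simp add: intg_power intg_diff)
  then show ?case unfolding e1 e2 by (simp add: power_mult_distrib)
qed

lemma cube_f: assumes "k \<ge> 1" shows "c3 (f_eta k ^ 3 - f_eta (3*k))"
  unfolding c3_def
proof
  fix n
  have "agree n (f_eta k ^ 3) (euler_trunc k n ^ 3)" by (rule agree_power[OF f_eta_agree]) (use assms in auto)
  moreover have "agree n (f_eta (3*k)) (euler_trunc (3*k) n)" by (rule f_eta_agree) (use assms in auto)
  ultimately have "(f_eta k ^ 3 - f_eta (3*k)) $ n = (euler_trunc k n ^ 3 - euler_trunc (3*k) n) $ n"
    unfolding agree_def by simp
  then show "(f_eta k ^ 3 - f_eta (3*k)) $ n / 3 \<in> \<int>" using cube_trunc unfolding c3_def by simp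
qed



definition Eg :: "nat \<Rightarrow> nat \<Rightarrow> rat fps" where "Eg k m = 1 + fps_X ^ (k*(2*m-1))"
definition Ef :: "nat \<Rightarrow> rat fps" where "Ef k = pinf (Eg k)"

lemma good_Eg: "k \<ge> 1 \<Longrightarrow> good (Eg k)"
  unfolding good_def agree_def Eg_def
proof (intro allI impI)
  fix m i :: nat assume "k\<ge>1" "m \<ge> 1" "i \<le> m - 1"
  then have "i < 2*m-1" by linarith
  also have "2*m-1 \<le> k*(2*m-1)" using \<open>k\<ge>1\<close> by simp
  finally have "i < k*(2*m-1)" .
  then show "(1 + fps_X ^ (k*(2*m-1))) $ i = (1::rat fps) $ i" by simp
qed

lemma intg_Ef: "intg (Ef k)"
  unfolding Ef_def by (rule intg_pinf) (simp add: Eg_def intg_add)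

lemma euler_Suc: "euler_trunc k (Suc N) = euler_trunc k N * (1 - fps_X ^ (Suc N * k))"
  by (simp add: euler_ptr ptr_Suc)

lemma R1_trunc:
  "ptr (Eg k) n * euler_trunc k (2*n) * euler_trunc (4*k) n = euler_trunc (2*k) n * euler_trunc (2*k) (2*n)"
proof (induction n)
  case 0 then show ?case by (simp add: euler_trunc_def)
next
  case (Suc n)
  define a where "a = Suc (2*n) * k"
  define b where "b = Suc (Suc (2*n)) * k"
  define c where "c = Suc n * (4*k)"
  define d where "d = Suc (2*n) * (2*k)"
  have bb: "Suc n * (2*k) = b" unfolding b_def by simp
  have cc: "Suc (Suc (2*n)) * (2*k) = c" unfolding c_def by simp
  have dd: "d = a + a" unfolding a_def d_def by simp
  have a: "ptr (Eg k) (Suc n) = ptr (Eg k) n * (1 + fps_X ^ a)"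
    by (simp add: ptr_Suc Eg_def a_def mult.commute)
  have b: "euler_trunc k (2 * Suc n) = euler_trunc k (2*n) * (1 - fps_X ^ a) * (1 - fps_X ^ b)"
    unfolding a_def b_def by (simp only: euler_Suc mult_2 add_Suc_right add_Suc)
  have c: "euler_trunc (4*k) (Suc n) = euler_trunc (4*k) n * (1 - fps_X ^ c)"
    unfolding c_def by (rule euler_Suc)
  have d: "euler_trunc (2*k) (Suc n) = euler_trunc (2*k) n * (1 - fps_X ^ b)"
    unfolding bb[symmetric] by (rule euler_Suc)
  have e: "euler_trunc (2*k) (2*Suc n) = euler_trunc (2*k) (2*n) * (1 - fps_X ^ d) * (1 - fps_X ^ c)"
    unfolding cc[symmetric] d_def by (simp only: euler_Suc mult_2 add_Suc_right add_Suc)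
  have f: "(1 + fps_X ^ a) * (1 - fps_X ^ a) = (1 - fps_X ^ d :: rat fps)"
    unfolding dd power_add by (simp add: algebra_simps)
  show ?case unfolding a b c d e
  proof -
    have "ptr (Eg k) n * (1 + fps_X ^ a) * (euler_trunc k (2 * n) * (1 - fps_X ^ a) * (1 - fps_X ^ b)) *
    (euler_trunc (4 * k) n * (1 - fps_X ^ c)) =
     (ptr (Eg k) n * euler_trunc k (2 * n) * euler_trunc (4 * k) n) * ((1 + fps_X ^ a) * (1 - fps_X ^ a)) * (1 - fps_X ^ b) * (1 - fps_X ^ c)"
      by (simp only: ac_simps)
    also have "\<dots> = euler_trunc (2 * k) n * (1 - fps_X ^ b) * (euler_trunc (2 * k) (2 * n) * (1 - fps_X ^ d) * (1 - fps_X ^ c))"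
      unfolding Suc.IH f by (simp only: ac_simps)
    finally show "ptr (Eg k) n * (1 + fps_X ^ a) * (euler_trunc k (2 * n) * (1 - fps_X ^ a) * (1 - fps_X ^ b)) *
    (euler_trunc (4 * k) n * (1 - fps_X ^ c)) =
    euler_trunc (2 * k) n * (1 - fps_X ^ b) * (euler_trunc (2 * k) (2 * n) * (1 - fps_X ^ d) * (1 - fps_X ^ c))" .
  qed
qed

lemma R1: assumes "k \<ge> 1" shows "Ef k * f_eta k * f_eta (4*k) = f_eta (2*k) ^ 2"
proof (rule fps_ext)
  fix d
  have "agree d (Ef k * f_eta k * f_eta (4*k)) (ptr (Eg k) d * euler_trunc k (2*d) * euler_trunc (4*k) d)"
    using assms unfolding Ef_def
    by (intro agree_mult pinf_agree good_Eg f_eta_agree) auto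
  moreover have "agree d (f_eta (2*k) ^ 2) (euler_trunc (2*k) d * euler_trunc (2*k) (2*d))"
    unfolding power2_eq_square using assms by (intro agree_mult f_eta_agree) auto
  ultimately show "(Ef k * f_eta k * f_eta (4*k)) $ d = (f_eta (2*k) ^ 2) $ d"
    unfolding R1_trunc agree_def by simp
qed



fun tri :: "nat \<Rightarrow> nat" where "tri 0 = 0" | "tri (Suc i) = tri i + i"

fun qb :: "rat fps \<Rightarrow> nat \<Rightarrow> nat \<Rightarrow> rat fps" where
  "qb p m 0 = 1"
| "qb p 0 (Suc i) = 0"
| "qb p (Suc m) (Suc i) = qb p m (Suc i) + p^(m-i) * qb p m i"

lemma qb_gt: "m < i \<Longrightarrow> qb p m i = 0"
proof (induction m arbitrary: i)
  case 0 then show ?case by (cases i) auto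
next
  case (Suc m) then show ?case by (cases i) auto
qed

lemma qbin: "(\<Prod>j<M. y + x*p^j) = (\<Sum>i\<le>M. qb p M i * p^(tri i) * x^i * y^(M-i))"
proof (induction M)
  case 0 then show ?case by simp
next
  case (Suc M)
  define S where "S = (\<Sum>i\<le>M. qb p M i * p^(tri i) * x^i * y^(M-i))"
  have A: "(\<Sum>i\<le>Suc M. qb p M i * p^(tri i) * x^i * y^(Suc M - i)) = S * y"
  proof -
    have "(\<Sum>i\<le>Suc M. qb p M i * p^(tri i) * x^i * y^(Suc M - i))
        = (\<Sum>i\<le>M. qb p M i * p^(tri i) * x^i * y^(Suc M - i))"
      by (simp add: qb_gt)
    also have "\<dots> = (\<Sum>i\<le>M. qb p M i * p^(tri i) * x^i * y^(M - i) * y)"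
      by (intro sum.cong refl) (simp add: Suc_diff_le)
    finally show ?thesis by (simp add: S_def sum_distrib_right)
  qed
  have B: "(\<Sum>i\<le>M. p^(M-i) * qb p M i * p^(tri i + i) * x^(Suc i) * y^(M-i)) = S * (x * p^M)"
    unfolding S_def sum_distrib_right
  proof (intro sum.cong refl)
    fix i assume "i \<in> {..M}"
    then have "p^(M-i) * p^(tri i + i) = p^(tri i) * p^M"
      by (simp add: power_add[symmetric] add.commute)
    then show "p^(M-i) * qb p M i * p^(tri i + i) * x^(Suc i) * y^(M-i) = qb p M i * p ^ tri i * x ^ i * y ^ (M - i) * (x * p ^ M)"
      by (simp add: algebra_simps)
  qed
  have "(\<Sum>i\<le>Suc M. qb p (Suc M) i * p^(tri i) * x^i * y^(Suc M-i))
      = y^(Suc M) + (\<Sum>i\<le>M. qb p (Suc M) (Suc i) * p^(tri (Suc i)) * x^(Suc i) * y^(Suc M - Suc i))"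
    by (simp only: sum.atMost_Suc_shift) simp
  also have "\<dots> = y^(Suc M) + (\<Sum>i\<le>M. qb p M (Suc i) * p^(tri (Suc i)) * x^(Suc i) * y^(Suc M - Suc i))
       + (\<Sum>i\<le>M. p^(M-i) * qb p M i * p^(tri i + i) * x^(Suc i) * y^(M-i))"
    by (simp add: sum.distrib algebra_simps)
  also have "y^(Suc M) + (\<Sum>i\<le>M. qb p M (Suc i) * p^(tri (Suc i)) * x^(Suc i) * y^(Suc M - Suc i))
      = (\<Sum>i\<le>Suc M. qb p M i * p^(tri i) * x^i * y^(Suc M - i))"
    by (simp only: sum.atMost_Suc_shift) simp
  finally have "(\<Sum>i\<le>Suc M. qb p (Suc M) i * p^(tri i) * x^i * y^(Suc M-i)) = S * y + S * (x * p^M)"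
    using A B by simp
  moreover have "(\<Prod>j<Suc M. y + x*p^j) = S * (y + x * p^M)"
    using Suc.IH by (simp add: S_def)
  ultimately show ?case by (simp add: algebra_simps)
qed

definition eu :: "rat fps \<Rightarrow> nat \<Rightarrow> rat fps" where "eu p a = ptr (\<lambda>j. 1 - p^j) a"

lemma eu_Suc: "eu p (Suc a) = eu p a * (1 - p^(Suc a))" by (simp add: eu_def ptr_Suc)

lemma qb_rel: "i \<le> m \<Longrightarrow> eu p i * eu p (m-i) * qb p m i = eu p m"
proof (induction m arbitrary: i)
  case 0 then show ?case by (simp add: eu_def)
next
  case (Suc m)
  show ?case
  proof (cases i)
    case 0 then show ?thesis by (simp add: eu_def)
  next
    case (Suc j)
    with Suc.prems have jm: "j \<le> m" by simp
    have t1: "eu p (Suc j) * eu p (m - j) * qb p m (Suc j) = (1 - p^(m-j)) * eu p m"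
    proof (cases "j = m")
      case True then show ?thesis by (simp add: qb_gt)
    next
      case False
      then have "Suc j \<le> m" using jm by simp
      then have "m - j = Suc (m - Suc j)" by simp
      then have "eu p (m - j) = eu p (m - Suc j) * (1 - p^(m-j))" by (simp add: eu_Suc)
      then have "eu p (Suc j) * eu p (m - j) * qb p m (Suc j) = (1 - p^(m-j)) * (eu p (Suc j) * eu p (m - Suc j) * qb p m (Suc j))"
        by (simp only: ac_simps)
      also have "\<dots> = (1 - p^(m-j)) * eu p m" using Suc.IH[OF \<open>Suc j \<le> m\<close>] by simp
      finally show ?thesis .
    qed
    have t2: "eu p (Suc j) * eu p (m - j) * (p^(m-j) * qb p m j) = (1 - p^(Suc j)) * p^(m-j) * eu p m"
    proof -
      have "eu p (Suc j) * eu p (m - j) * (p^(m-j) * qb p m j) = (1 - p^(Suc j)) * p^(m-j) * (eu p j * eu p (m - j) * qb p m j)"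
        by (simp add: eu_Suc algebra_simps)
      then show ?thesis using Suc.IH[OF jm] by simp
    qed
    have pp: "p^(Suc j) * p^(m-j) = p^(Suc m)" using jm by (simp add: power_add[symmetric])
    have "eu p (Suc j) * eu p (m - j) * qb p (Suc m) (Suc j) = (1 - p^(m-j)) * eu p m + (1 - p^(Suc j)) * p^(m-j) * eu p m"
    proof -
      have "eu p (Suc j) * eu p (m - j) * qb p (Suc m) (Suc j) = eu p (Suc j) * eu p (m - j) * qb p m (Suc j) + eu p (Suc j) * eu p (m - j) * (p^(m-j) * qb p m j)"
        by (simp add: distrib_left)
      then show ?thesis unfolding t1 t2 .
    qed
    also have "\<dots> = eu p m * (1 - p^(Suc j) * p^(m-j))" by (simp add: algebra_simps del: power_Suc)
    also have "\<dots> = eu p (Suc m)" by (simp only: pp eu_Suc)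
    finally show ?thesis using Suc by simp
  qed
qed



lemma prod_split: fixes a b :: nat shows "(\<Prod>j<a+b. g j) = (\<Prod>j<a. g j) * (\<Prod>j<b. g (a+j))"
proof (induction b)
  case 0 then show ?case by simp
next
  case (Suc b) then show ?case by (simp add: ac_simps)
qed

lemma tri_sum: "(\<Sum>j<n. j) = tri n" by (induction n) simp_all
lemma tri2: "2 * tri i + i = i * i"
proof (induction i)
  case 0 then show ?case by simp
next
  case (Suc i) then show ?case by (simp add: algebra_simps)
qed

lemma ptr_shift: "ptr g n = (\<Prod>j<n. g (Suc j))"
  by (induction n) (simp_all add: ptr_Suc)

definition dd :: "nat \<Rightarrow> nat \<Rightarrow> nat" where "dd i n = (if i \<le> n then n - i else i - n)"

lemma expo: assumes "i \<le> 2*n" "n \<ge> 1"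
  shows "2 * tri i + (2*n-1)*(2*n-i) = 2 * tri n + (2*n-1)*n + dd i n ^ 2"
proof -
  have a: "int (2 * tri i) = int i * (int i - 1)"
  proof -
    have "int (2 * tri i + i) = int (i * i)" using tri2[of i] by simp
    then show ?thesis by (simp add: algebra_simps)
  qed
  have b: "int (2 * tri n) = int n * (int n - 1)"
  proof -
    have "int (2 * tri n + n) = int (n * n)" using tri2[of n] by simp
    then show ?thesis by (simp add: algebra_simps)
  qed
  have c: "int (dd i n ^ 2) = (int i - int n)^2" unfolding dd_def by (auto simp: of_nat_diff power2_commute)
  have "int (2 * tri i + (2*n-1)*(2*n-i)) = int (2 * tri i) + (2*int n-1)*(2*int n- int i)"
    using assms by (simp add: of_nat_diff)
  also have "\<dots> = int (2 * tri n) + (2*int n-1)* int n + int (dd i n ^ 2)"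
    unfolding a b c by (simp add: power2_eq_square algebra_simps)
  also have "\<dots> = int (2 * tri n + (2*n-1)*n + dd i n ^ 2)"
    using assms by (simp add: of_nat_diff)
  finally have "int (2 * tri i + (2*n-1)*(2*n-i)) = int (2 * tri n + (2*n-1)*n + dd i n ^ 2)" .
  then show ?thesis by (rule of_nat_eq_iff[THEN iffD1])
qed

lemma I1:
  assumes "n \<ge> 1"
  shows "ptr (Eg k) n ^ 2 = (\<Sum>i\<le>2*n. qb (fps_X^(2*k)) (2*n) i * fps_X ^ (k * dd i n ^ 2))"
proof -
  define y :: "rat fps" where "y = fps_X ^ (k*(2*n-1))"
  define p :: "rat fps" where "p = fps_X ^ (2*k)"
  define E where "E = 2*k*tri n + k*(2*n-1)*n"
  have part2: "(\<Prod>j<n. y + 1*p^(n+j)) = y^n * ptr (Eg k) n"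
  proof -
    have "(\<Prod>j<n. y + 1*p^(n+j)) = (\<Prod>j<n. y * Eg k (Suc j))"
    proof (intro prod.cong refl)
      fix j
      have kn: "k*(2*n-1) + k = 2*k*n" using assms by (cases n) (auto simp: algebra_simps)
      have "k*(2*Suc j - 1) = k + 2*k*j" by (simp add: algebra_simps)
      then have "k*(2*n-1) + k*(2*Suc j - 1) = 2*k*(n+j)" using kn by (simp add: distrib_left)
      then have "p^(n+j) = y * fps_X^(k*(2*Suc j - 1))"
        unfolding p_def y_def by (simp add: power_mult[symmetric] power_add[symmetric] mult.assoc)
      then show "y + 1*p^(n+j) = y * Eg k (Suc j)" by (simp add: Eg_def algebra_simps)
    qed
    also have "\<dots> = y^n * ptr (Eg k) n" by (simp add: prod.distrib ptr_shift)
    finally show ?thesis .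
  qed
  have part1: "(\<Prod>j<n. y + 1*p^j) = fps_X^(2*k*tri n) * ptr (Eg k) n"
  proof -
    have "(\<Prod>j<n. y + 1*p^j) = (\<Prod>j<n. fps_X^(2*k*j) * Eg k (n - j))"
    proof (intro prod.cong refl)
      fix j assume "j \<in> {..<n}"
      then obtain t where t: "n = j + Suc t" using less_imp_Suc_add by fastforce
      have "2*k*j + k*(2*(n-j)-1) = k*(2*n-1)" unfolding t by (simp add: algebra_simps)
      then have "y = fps_X^(2*k*j) * fps_X^(k*(2*(n-j)-1))"
        unfolding y_def by (simp add: power_add[symmetric])
      moreover have "p^j = fps_X^(2*k*j)" unfolding p_def by (simp add: power_mult[symmetric])
      ultimately show "y + 1*p^j = fps_X^(2*k*j) * Eg k (n - j)" by (simp add: Eg_def algebra_simps)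
    qed
    also have "\<dots> = (\<Prod>j<n. fps_X^(2*k*j)) * (\<Prod>j<n. Eg k (n - j))" by (simp add: prod.distrib)
    also have "(\<Prod>j<n. Eg k (n - j)) = ptr (Eg k) n"
    proof -
      have "(\<Prod>j<n. Eg k (n - j)) = (\<Prod>j<n. (\<lambda>j. Eg k (Suc j)) (n - Suc j))"
        by (intro prod.cong refl) (simp add: Suc_diff_Suc)
      also have "\<dots> = (\<Prod>j<n. Eg k (Suc j))" by (rule prod.nat_diff_reindex)
      finally show ?thesis by (simp add: ptr_shift)
    qed
    also have "(\<Prod>j<n. fps_X^(2*k*j)) = (fps_X :: rat fps)^(\<Sum>j<n. 2*k*j)" by (simp add: power_sum)
    also have "(\<Sum>j<n. 2*k*j) = 2*k*tri n" by (simp add: sum_distrib_left[symmetric] tri_sum)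
    finally show ?thesis .
  qed
  have lhs: "(\<Prod>j<2*n. y + 1*p^j) = fps_X^E * ptr (Eg k) n ^ 2"
  proof -
    have "(\<Prod>j<2*n. y + 1*p^j) = (\<Prod>j<n. y + 1*p^j) * (\<Prod>j<n. y + 1*p^(n+j))"
      using prod_split[of "\<lambda>j. y + 1*p^j" n n] by (simp add: mult_2)
    also have "\<dots> = fps_X^(2*k*tri n) * y^n * (ptr (Eg k) n)^2" unfolding part1 part2
      by (simp add: power2_eq_square ac_simps)
    also have "fps_X^(2*k*tri n) * y^n = fps_X^E" unfolding y_def E_def
      by (simp add: power_add power_mult)
    finally show ?thesis .
  qed
  have rhs: "(\<Sum>i\<le>2*n. qb p (2*n) i * p^(tri i) * 1^i * y^(2*n-i)) = fps_X^E * (\<Sum>i\<le>2*n. qb p (2*n) i * fps_X ^ (k * dd i n ^ 2))"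
    unfolding sum_distrib_left
  proof (intro sum.cong refl)
    fix i assume "i \<in> {..2*n}"
    then have "2*k*tri i + k*(2*n-1)*(2*n-i) = E + k * dd i n ^ 2"
      using expo[of i n] assms unfolding E_def
      by (metis (no_types, lifting) add_mult_distrib2 atMost_iff mult.assoc mult_2 )
    then have "p^(tri i) * y^(2*n-i) = fps_X^E * fps_X ^ (k * dd i n ^ 2)"
      unfolding p_def y_def by (simp add: power_mult[symmetric] power_add[symmetric] mult.assoc)
    then show "qb p (2*n) i * p^(tri i) * 1^i * y^(2*n-i) = fps_X^E * (qb p (2*n) i * fps_X ^ (k * dd i n ^ 2))"
      by (simp add: ac_simps)
  qed
  have "fps_X^E * ptr (Eg k) n ^ 2 = fps_X^E * (\<Sum>i\<le>2*n. qb p (2*n) i * fps_X ^ (k * dd i n ^ 2))"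
    using qbin[of y 1 p "2*n"] lhs rhs by simp
  then show ?thesis unfolding p_def by simp
qed



lemma f_eta_0: "k \<ge> 1 \<Longrightarrow> f_eta k $ 0 = 1"
  using f_eta_agree[of k 0 0] by (simp add: agree_def euler_trunc_def)

lemma eu_euler: "eu (fps_X^(2*k)) a = euler_trunc (2*k) a"
  unfolding eu_def euler_ptr by (simp add: power_mult[symmetric] mult.commute)

lemma qb_agree:
  assumes k: "k \<ge> 1" and "i \<le> M" "m \<le> i" "m \<le> M - i"
  shows "agree m (qb (fps_X^(2*k)) M i * f_eta (2*k)) 1"
proof -
  define p :: "rat fps" where "p = fps_X^(2*k)"
  define f where "f = f_eta (2*k)"
  have fa: "agree m f (eu p a)" if "m \<le> a" for a
    unfolding f_def p_def eu_euler using k that by (intro f_eta_agree) auto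
  have r: "eu p i * eu p (M-i) * qb p M i = eu p M" using qb_rel assms(2) by blast
  have "agree m (f * f * qb p M i) (eu p i * eu p (M-i) * qb p M i)"
    using assms by (intro agree_mult fa agree_refl) auto
  then have "agree m (f * f * qb p M i) f" unfolding r using fa[of M] assms agree_sym agree_trans
    by (metis le_trans)
  then have "agree m ((qb p M i * f) * f) (1 * f)" by (simp add: ac_simps)
  moreover have "f $ 0 \<noteq> 0" unfolding f_def using f_eta_0 k by simp
  ultimately show ?thesis using agree_cancel unfolding p_def f_def by blast
qed

lemma PHI:
  assumes k: "k \<ge> 1" and nz: "(Ef k ^ 2 * f_eta (2*k)) $ m \<noteq> 0"
  shows "\<exists>s. m = k * s^2"
proof (rule ccontr)
  assume H: "\<not> (\<exists>s. m = k * s^2)"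
  define n where "n = 2*m+1"
  define f where "f = f_eta (2*k)"
  define p :: "rat fps" where "p = fps_X^(2*k)"
  have n1: "n \<ge> 1" unfolding n_def by simp
  have ag: "agree m (Ef k ^ 2 * f) (ptr (Eg k) n ^ 2 * f)"
    unfolding Ef_def using k n_def by (intro agree_mult agree_power pinf_agree good_Eg agree_refl) auto
  have "(ptr (Eg k) n ^ 2 * f) $ m = (\<Sum>i\<le>2*n. (fps_X ^ (k * dd i n ^ 2) * (qb p (2*n) i * f)) $ m)"
    unfolding I1[OF n1] sum_distrib_right fps_sum_nth p_def by (simp add: ac_simps)
  also have "\<dots> = 0"
  proof (intro sum.neutral ballI)
    fix i assume i: "i \<in> {..2*n}"
    show "(fps_X ^ (k * dd i n ^ 2) * (qb p (2*n) i * f)) $ m = 0"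
    proof (cases "m < k * dd i n ^ 2")
      case True then show ?thesis by (simp add: fps_X_power_mult_nth)
    next
      case False
      have "dd i n \<le> dd i n ^ 2" by (simp add: power2_eq_square)
      also have "\<dots> \<le> k * dd i n ^ 2" using k by simp
      finally have "dd i n \<le> m" using False by simp
      then have "m \<le> i" "m \<le> 2*n - i" using i unfolding dd_def n_def by (auto split: if_splits)
      then have "agree m (qb p (2*n) i * f) 1" unfolding p_def f_def
        using qb_agree[OF k] i by auto
      moreover have "m - k * dd i n ^ 2 \<le> m" by simp
      moreover have "m \<noteq> k * dd i n ^ 2" using H by blast
      ultimately show ?thesis using False by (simp add: fps_X_power_mult_nth agree_def)
    qed
  qed
  finally show False using ag nz unfolding agree_def f_def by simp
qed

definition supp :: "nat \<Rightarrow> rat fps \<Rightarrow> bool" where "supp d A \<longleftrightarrow> (\<forall>j. A $ j \<noteq> 0 \<longrightarrow> d dvd j)"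

lemma supp_mult: "supp d A \<Longrightarrow> supp d B \<Longrightarrow> supp d (A*B)"
  unfolding supp_def
proof (intro allI impI)
  fix j assume a: "\<forall>j. A $ j \<noteq> 0 \<longrightarrow> d dvd j" "\<forall>j. B $ j \<noteq> 0 \<longrightarrow> d dvd j" and nz: "(A * B) $ j \<noteq> 0"
  then obtain i where i: "i \<in> {0..j}" "A $ i * B $ (j - i) \<noteq> 0" unfolding fps_mult_nth
    by (meson sum.neutral)
  then have "d dvd i" "d dvd (j - i)" using a by auto
  then show "d dvd j" using i by (metis atLeastAtMost_iff dvd_add le_add_diff_inverse)
qed

lemma supp_1: "supp d 1" unfolding supp_def by simp
lemma supp_power: "supp d A \<Longrightarrow> supp d (A^m)" by (induction m) (auto intro: supp_mult supp_1)

lemma supp_euler: "supp k (euler_trunc k N)"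
proof (induction N)
  case 0 then show ?case by (simp add: euler_trunc_def supp_1)
next
  case (Suc N)
  have "supp k (1 - fps_X ^ (Suc N * k))" unfolding supp_def by simp
  then show ?case using Suc by (simp add: euler_Suc supp_mult)
qed

lemma supp_f_eta: "k \<ge> 1 \<Longrightarrow> supp k (f_eta k)"
  unfolding supp_def
proof (intro allI impI)
  fix j assume "k \<ge> 1" "f_eta k $ j \<noteq> 0"
  then have "euler_trunc k j $ j \<noteq> 0" using f_eta_agree[of k j j] unfolding agree_def by simp
  then show "k dvd j" using supp_euler unfolding supp_def by blast
qed



lemma c3_neg: "c3 (A - B) \<Longrightarrow> c3 (B - A)"
  using c3_diff[OF c3_0, of "A - B"] by simp

lemma mod_contra:
  fixes n s :: nat
  assumes "3*s^2 \<le> 9*n+6" "36 dvd (9*n+6 - 3*s^2)"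
  shows False
proof -
  obtain t where t: "9*n+6 - 3*s^2 = 36*t" using assms(2) by blast
  then have "3*n+2 = s^2 + 12*t" using assms(1) by linarith
  then have "s^2 mod 3 = 2" by presburger
  moreover have "s^2 mod 3 = (s mod 3)^2 mod 3" by (simp add: power_mod)
  moreover have "s mod 3 < 3" by simp
  moreover have "s mod 3 = 0 \<or> s mod 3 = 1 \<or> s mod 3 = 2" by presburger
  ultimately show False by (auto simp: power2_eq_square)
qed

lemma R_zero:
  "(Ef 3 ^ 2 * f_eta 6 * f_eta 36) $ (9*n+6) = 0"
  unfolding fps_mult_nth[of "Ef 3 ^ 2 * f_eta 6"]
proof (intro sum.neutral ballI)
  fix i assume i: "i \<in> {0..9*n+6}"
  show "(Ef 3 ^ 2 * f_eta 6) $ i * f_eta 36 $ (9 * n + 6 - i) = 0"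
  proof (rule ccontr)
    assume nz: "(Ef 3 ^ 2 * f_eta 6) $ i * f_eta 36 $ (9 * n + 6 - i) \<noteq> 0"
    then have "(Ef 3 ^ 2 * f_eta (2*3)) $ i \<noteq> 0" by simp
    then obtain s where s: "i = 3 * s^2" using PHI[of 3 i] by auto
    have "f_eta 36 $ (9 * n + 6 - i) \<noteq> 0" using nz by simp
    then have "36 dvd (9 * n + 6 - i)" using supp_f_eta[of 36] unfolding supp_def by simp
    then show False using mod_contra[of s n] i s by simp
  qed
qed

lemma idx: "(i::nat) + 18 * t = 9*m+6 \<Longrightarrow> i < 9*m+6 \<Longrightarrow> i = 9*(m - 2*t) + 6 \<and> m - 2*t < m"
  by presburger

lemma g1: "(b::'a::comm_ring_1) * u^2 * (a^6 * c^3) = (b * (a^6 * c^3)) * u^2" by (simp add: eval_nat_numeral algebra_simps)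
lemma g2: "(x::'a::comm_ring_1) * (y^3)^2 = y^6 * x" by (simp add: eval_nat_numeral algebra_simps)
lemma g3: "(e::'a::comm_ring_1)^2 * x * y * (a^6 * c^3) = (e^2 * x) * (y * (a^3)^2 * c^3)" by (simp add: eval_nat_numeral algebra_simps)
lemma g4: "(a::'a::comm_ring_1 ) * b - a * c = (b - c) * a" by (simp add: eval_nat_numeral algebra_simps)
lemma g5: "(e::'a::comm_ring_1)^2 * f6 * (f12^3 * f3^2 * f6) = (e * f3 * f12)^2 * f6^2 * f12" by (simp add: eval_nat_numeral algebra_simps)
lemma g6: "((f6::'a::comm_ring_1)^2)^2 * f6^2 * f12 = f6^6 * f12" by (simp add: eval_nat_numeral algebra_simps)

theorem mainTheorem11:
  fixes n :: nat
  shows "\<exists>z::int. bt_bar (9 * n + 6) = of_int (3 * z)"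
proof -
  define f where "f = f_eta"
  define D where "D = f 1 ^ 6 * f 2 ^ 3"
  have intf: "intg (f k)" for k unfolding f_def by (rule intg_f_eta)
  have f0: "k \<ge> 1 \<Longrightarrow> f k $ 0 = 1" for k unfolding f_def by (rule f_eta_0)
  have D0: "D $ 0 = 1" unfolding D_def using f0[of 1] f0[of 2] by (simp add: fps_nth_power_0)
  have intD: "intg D" unfolding D_def by (intro intg_mult intg_power intf)
  have btD: "bt_gf * D = f 4 ^ 3"
  proof -
    have bt: "bt_gf = f 4 ^ 3 * inverse D" unfolding bt_gf_def D_def f_def
      using D0 unfolding D_def f_def by (simp add: fps_divide_unit)
    have "inverse D * D = 1" using D0 by (intro inverse_mult_eq_1) simp
    then have "bt_gf * D = f 4 ^ 3 * (inverse D * D)" unfolding bt by (simp only: mult.assoc)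
    then show ?thesis using \<open>inverse D * D = 1\<close> by simp
  qed
  have intbt: "intg bt_gf" using intg_cancel[OF intD D0] btD intg_power intf by metis
  have cf: "c3 (f k ^ 3 - f (3*k))" if "k \<ge> 1" for k unfolding f_def using cube_f that by blast
  define E where "E = Ef 3"
  have intE: "intg E" unfolding E_def by (rule intg_Ef)
  have R1': "E * f 3 * f 12 = f 6 ^ 2" unfolding E_def f_def using R1[of 3] by simp
  define L where "L = bt_gf * f 18 ^ 2"
  define R where "R = E ^ 2 * f 6 * f 36"
  define T where "T = f 6 ^ 6 * f 12"
  have LD: "c3 (L * D - T)"
  proof -
    have "L * D = (bt_gf * D) * f 18 ^ 2" unfolding L_def D_def by (rule g1)
    then have "L * D = f 4 ^ 3 * f 18 ^ 2" using btD by simp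
    moreover have "c3 (f 4 ^ 3 * f 18 ^ 2 - f 12 * (f 6 ^ 3) ^ 2)"
    proof (rule c3_congmult)
      show "c3 (f 4 ^ 3 - f 12)" using cf[of 4] by simp
      have "c3 (f 18 - f 6 ^ 3)" using cf[of 6] c3_neg by simp
      then show "c3 (f 18 ^ 2 - (f 6 ^ 3) ^ 2)" by (intro c3_congpow intg_power intf)
    qed (auto intro: intg_power intf)
    moreover have "f 12 * (f 6 ^ 3) ^ 2 = T" unfolding T_def by (rule g2)
    ultimately show ?thesis by simp
  qed
  have RD: "c3 (R * D - T)"
  proof -
    have "R * D = (E^2 * f 6) * (f 36 * (f 1 ^ 3) ^ 2 * f 2 ^ 3)"
      unfolding R_def D_def by (rule g3)
    moreover have "c3 ((E^2 * f 6) * (f 36 * (f 1 ^ 3) ^ 2 * f 2 ^ 3) - (E^2 * f 6) * (f 12 ^ 3 * f 3 ^ 2 * f 6))"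
    proof -
      have a: "c3 (f 36 - f 12 ^ 3)" using cf[of 12] c3_neg by simp
      have b: "c3 ((f 1 ^ 3) ^ 2 - f 3 ^ 2)" using cf[of 1] by (intro c3_congpow intg_power intf) simp
      have c: "c3 (f 2 ^ 3 - f 6)" using cf[of 2] by simp
      have ab: "c3 (f 36 * (f 1 ^ 3) ^ 2 - f 12 ^ 3 * f 3 ^ 2)"
        by (rule c3_congmult[OF a b]) (auto intro: intg_power intf)
      have "c3 (f 36 * (f 1 ^ 3) ^ 2 * f 2 ^ 3 - f 12 ^ 3 * f 3 ^ 2 * f 6)"
        by (rule c3_congmult[OF ab c]) (auto intro: intg_power intf intg_mult)
      then have "c3 ((f 36 * (f 1 ^ 3) ^ 2 * f 2 ^ 3 - f 12 ^ 3 * f 3 ^ 2 * f 6) * (E^2 * f 6))"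
        by (rule c3_mult_left) (auto intro: intg_power intf intg_mult intE)
      then show ?thesis by (simp only: g4)
    qed
    moreover have "(E^2 * f 6) * (f 12 ^ 3 * f 3 ^ 2 * f 6) = T"
    proof -
      have "(E^2 * f 6) * (f 12 ^ 3 * f 3 ^ 2 * f 6) = (E * f 3 * f 12)^2 * f 6 ^ 2 * f 12"
        by (rule g5)
      also have "\<dots> = T" unfolding R1' T_def by (rule g6)
      finally show ?thesis .
    qed
    ultimately show ?thesis by simp
  qed
  have "c3 ((L - R) * D)"
  proof -
    have "(L - R) * D = (L * D - T) - (R * D - T)" by (simp add: algebra_simps)
    then show ?thesis using c3_diff[OF LD RD] by simp
  qed
  then have cLR: "c3 (L - R)" by (rule c3_cancel[OF intD D0])
  have Lc: "L $ (9*m+6) / 3 \<in> \<int>" for m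
  proof -
    have "R $ (9*m+6) = 0" unfolding R_def E_def f_def by (rule R_zero)
    moreover have "(L - R) $ (9*m+6) / 3 \<in> \<int>" using cLR unfolding c3_def by blast
    ultimately show ?thesis by simp
  qed
  define U where "U = f 18 ^ 2"
  have U0: "U $ 0 = 1" unfolding U_def using f0[of 18] by (simp add: fps_nth_power_0)
  have intU: "intg U" unfolding U_def by (intro intg_power intf)
  have suppU: "supp 18 U" unfolding U_def f_def by (intro supp_power supp_f_eta) simp
  have main: "bt_gf $ (9*m+6) / 3 \<in> \<int>" for m
  proof (induction m rule: less_induct)
    case (less m)
    define N where "N = 9*m+6"
    have e: "L $ N = bt_gf $ N + (\<Sum>i=0..<N. bt_gf $ i * U $ (N-i))"
      unfolding L_def U_def[symmetric] fps_mult_nth using U0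
      by (simp add: sum.atLeastLessThan_Suc atLeastLessThanSuc_atLeastAtMost[symmetric] add.commute)
    have s: "(\<Sum>i=0..<N. bt_gf $ i * U $ (N-i)) / 3 \<in> \<int>"
      unfolding sum_divide_distrib
    proof (rule Ints_sum)
      fix i assume i: "i \<in> {0..<N}"
      show "bt_gf $ i * U $ (N - i) / 3 \<in> \<int>"
      proof (cases "U $ (N - i) = 0")
        case True then show ?thesis by simp
      next
        case False
        then have "18 dvd (N - i)" using suppU unfolding supp_def by blast
        then obtain t where t: "N - i = 18 * t" by blast
        have iN: "i < 9*m+6" using i unfolding N_def by simp
        have it: "i + 18 * t = 9*m+6" using t iN unfolding N_def by linarith
        have "i = 9*(m - 2*t) + 6 \<and> m - 2*t < m" using idx[OF it iN] .
        then have "bt_gf $ i / 3 \<in> \<int>" using less[of "m - 2*t"] by simp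
        moreover have "U $ (N - i) \<in> \<int>" using intU unfolding intg_def by simp
        ultimately show ?thesis by (metis Ints_mult times_divide_eq_left)
      qed
    qed
    have "L $ N / 3 - (\<Sum>i=0..<N. bt_gf $ i * U $ (N-i)) / 3 \<in> \<int>"
      using Lc[of m] s unfolding N_def by (intro Ints_diff) auto
    then show ?case unfolding e N_def[symmetric] by (simp add: add_divide_distrib)
  qed
  obtain z where "bt_gf $ (9*n+6) / 3 = of_int z" using main[of n] by (auto elim: Ints_cases)
  then have "bt_bar (9*n+6) = of_int (3*z)" unfolding bt_bar_def by simp
  then show ?thesis by blast
qed


end
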